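(* Let $\varphi_0\in\mathbb{R}$ and let $v$ be a smooth function with $v(\varphi)>0$ and $v'(\varphi)>0$ for all $\varphi\ge\varphi_0$, and suppose that $v$ grows faster than $e^{2\varphi}$ as $\varphi\to\infty$, i.e. $v(\varphi)e^{-2\varphi}\to\infty$. Then every solution of $h'=\sqrt{h^2-v}$ with initial value $h(\varphi_0)=h_0>\sqrt{v(\varphi_0)}$ reaches the curve $h=\sqrt{v(\varphi)}$ at a finite value of $\varphi$ (i.e., all solutions are of type A), and consequently there is no separatrix.
   Context: A solution of $h'=\sqrt{h^2-v}$ in $R_0=\{(\varphi,h):\varphi\ge\varphi_0,\ h>\sqrt{v(\varphi)}\}$ is of type A if it leaves $R_0$ by reaching the lower boundary $h=\sqrt{v(\varphi)}$ at a finite $\varphi$, and of type B if it remains in $R_0$ for all $\varphi>\varphi_0$. A separatrix exists only if both types occur; it is then the solution whose initial value $h(\varphi_0)$ equals the common boundary value $r$ between the initial values of type-A solutions (below $r$) and type-B solutions (above $r$). *)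

theory Defs
  imports "HOL-Analysis.Analysis"
begin

definition smooth_at_all :: "real set \<Rightarrow> (real \<Rightarrow> real) \<Rightarrow> bool" where
  "smooth_at_all S f \<longleftrightarrow>
     (\<exists>D :: nat \<Rightarrow> real \<Rightarrow> real. D 0 = f \<and>
        (\<forall>n. \<forall>x\<in>S. (D n has_real_derivative D (Suc n) x) (at x)))"

definition type_A :: "(real \<Rightarrow> real) \<Rightarrow> real \<Rightarrow> (real \<Rightarrow> real) \<Rightarrow> bool" where
  "type_A v \<phi>0 h \<longleftrightarrow>
     (\<exists>\<phi>1 > \<phi>0. continuous_on {\<phi>0..\<phi>1} h \<and> h \<phi>1 = sqrt (v \<phi>1) \<and>
        (\<forall>\<phi>\<in>{\<phi>0..<\<phi>1}. sqrt (v \<phi>) < h \<phi> \<and>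
           (h has_real_derivative sqrt ((h \<phi>)\<^sup>2 - v \<phi>)) (at \<phi> within {\<phi>0..<\<phi>1})))"

definition type_B :: "(real \<Rightarrow> real) \<Rightarrow> real \<Rightarrow> (real \<Rightarrow> real) \<Rightarrow> bool" where
  "type_B v \<phi>0 h \<longleftrightarrow>
     (\<forall>\<phi>\<ge>\<phi>0. sqrt (v \<phi>) < h \<phi> \<and>
        (h has_real_derivative sqrt ((h \<phi>)\<^sup>2 - v \<phi>)) (at \<phi> within {\<phi>0..}))"

definition separatrix_exists :: "(real \<Rightarrow> real) \<Rightarrow> real \<Rightarrow> bool" where
  "separatrix_exists v \<phi>0 \<longleftrightarrow> (\<exists>h. type_A v \<phi>0 h) \<and> (\<exists>h. type_B v \<phi>0 h)"

end

theory Submission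
  imports Defs
begin

primrec picY :: "(real \<Rightarrow> real) \<Rightarrow> real \<Rightarrow> real \<Rightarrow> nat \<Rightarrow> real \<Rightarrow> real" where
  "picY v c a 0 = (\<lambda>t. a)"
| "picY v c a (Suc n) = (\<lambda>t. a + integral {c..t} (\<lambda>s. sqrt (max ((picY v c a n s)^2 - v s) 0)))"

lemma F_mono:
  fixes x y w :: real
  assumes "0 \<le> x" "x \<le> y"
  shows "sqrt (max (x^2 - w) 0) \<le> sqrt (max (y^2 - w) 0)"
proof -
  have "x^2 \<le> y^2" using assms by (simp add: power_mono)
  thus ?thesis by (intro real_sqrt_le_mono) auto
qed

lemma F_le:
  fixes x w :: real
  assumes "0 < w" "0 \<le> x"
  shows "sqrt (max (x^2 - w) 0) \<le> x"
proof -
  have "sqrt (max (x^2 - w) 0) \<le> sqrt (x^2)" using assms by (intro real_sqrt_le_mono) auto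
  thus ?thesis using assms by simp
qed

lemma picY_cont:
  assumes "continuous_on {c..T} v"
  shows "continuous_on {c..T} (picY v c a n)"
proof (induction n)
  case 0 show ?case by (simp add: continuous_on_const)
next
  case (Suc n)
  have "continuous_on {c..T} (\<lambda>s. sqrt (max ((picY v c a n s)^2 - v s) 0))"
    using Suc assms by (intro continuous_intros) auto
  hence "(\<lambda>s. sqrt (max ((picY v c a n s)^2 - v s) 0)) integrable_on {c..T}"
    by (rule integrable_continuous_interval)
  hence "continuous_on {c..T} (\<lambda>t. integral {c..t} (\<lambda>s. sqrt (max ((picY v c a n s)^2 - v s) 0)))"
    by (rule indefinite_integral_continuous_1)
  thus ?case by (simp add: continuous_on_add continuous_on_const)
qed

lemma picF_int:
  assumes "continuous_on {c..T} v" "t \<in> {c..T}"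
  shows "(\<lambda>s. sqrt (max ((picY v c a n s)^2 - v s) 0)) integrable_on {c..t}"
proof -
  have "continuous_on {c..T} (\<lambda>s. sqrt (max ((picY v c a n s)^2 - v s) 0))"
    using picY_cont[OF assms(1)] assms by (intro continuous_intros) auto
  hence "continuous_on {c..t} (\<lambda>s. sqrt (max ((picY v c a n s)^2 - v s) 0))"
    by (rule continuous_on_subset) (use assms in auto)
  thus ?thesis by (rule integrable_continuous_interval)
qed

lemma picY_ge:
  assumes "continuous_on {c..T} v" "t \<in> {c..T}"
  shows "a \<le> picY v c a n t"
proof (cases n)
  case 0 thus ?thesis by simp
next
  case (Suc m)
  have "0 \<le> integral {c..t} (\<lambda>s. sqrt (max ((picY v c a m s)^2 - v s) 0))"
    by (rule Henstock_Kurzweil_Integration.integral_nonneg[OF picF_int[OF assms]]) auto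
  thus ?thesis using Suc by simp
qed

lemma picY_mono:
  assumes "continuous_on {c..T} v" "0 \<le> a" "t \<in> {c..T}"
  shows "picY v c a n t \<le> picY v c a (Suc n) t"
  using assms(3)
proof (induction n arbitrary: t)
  case 0
  show ?case using picY_ge[OF assms(1) 0, of a 1] by simp
next
  case (Suc n)
  have "integral {c..t} (\<lambda>s. sqrt (max ((picY v c a n s)^2 - v s) 0))
     \<le> integral {c..t} (\<lambda>s. sqrt (max ((picY v c a (Suc n) s)^2 - v s) 0))"
  proof (rule integral_le[OF picF_int[OF assms(1) Suc.prems] picF_int[OF assms(1) Suc.prems]])
    fix s assume s: "s \<in> {c..t}"
    hence sT: "s \<in> {c..T}" using Suc.prems by auto
    show "sqrt (max ((picY v c a n s)^2 - v s) 0) \<le> sqrt (max ((picY v c a (Suc n) s)^2 - v s) 0)"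
      by (rule F_mono) (use picY_ge[OF assms(1) sT, of a n] assms(2) Suc.IH[OF sT] in auto)
  qed
  thus ?case by simp
qed

lemma exp_integral:
  fixes a c t :: real
  assumes "c \<le> t"
  shows "((\<lambda>s. a * exp (s - c)) has_integral (a * exp (t - c) - a)) {c..t}"
proof -
  have "((\<lambda>s. a * exp (s - c)) has_integral (a * exp (t - c) - a * exp (c - c))) {c..t}"
  proof (rule fundamental_theorem_of_calculus[OF assms])
    fix x assume "x \<in> {c..t}"
    have "((\<lambda>s. a * exp (s - c)) has_real_derivative a * exp (x - c)) (at x within {c..t})"
      by (auto intro!: derivative_eq_intros)
    thus "((\<lambda>s. a * exp (s - c)) has_vector_derivative a * exp (x - c)) (at x within {c..t})"
      by (simp add: has_real_derivative_iff_has_vector_derivative)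
  qed
  thus ?thesis by simp
qed

lemma picY_le:
  assumes "continuous_on {c..T} v" "\<And>s. s \<in> {c..T} \<Longrightarrow> 0 < v s" "0 \<le> a" "t \<in> {c..T}"
  shows "picY v c a n t \<le> a * exp (t - c)"
  using assms(4)
proof (induction n arbitrary: t)
  case 0
  have "1 \<le> exp (t - c)" using 0 by auto
  hence "a * 1 \<le> a * exp (t - c)" using assms(3) by (rule mult_left_mono)
  thus ?case by simp
next
  case (Suc n)
  have ct: "c \<le> t" using Suc.prems by auto
  have "integral {c..t} (\<lambda>s. sqrt (max ((picY v c a n s)^2 - v s) 0))
     \<le> integral {c..t} (\<lambda>s. a * exp (s - c))"
  proof (rule integral_le[OF picF_int[OF assms(1) Suc.prems]])
    show "(\<lambda>s. a * exp (s - c)) integrable_on {c..t}" using exp_integral[OF ct] by blast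
    fix s assume s: "s \<in> {c..t}"
    hence sT: "s \<in> {c..T}" using Suc.prems by auto
    have "sqrt (max ((picY v c a n s)^2 - v s) 0) \<le> picY v c a n s"
      by (rule F_le) (use assms(2)[OF sT] picY_ge[OF assms(1) sT, of a n] assms(3) in auto)
    also have "\<dots> \<le> a * exp (s - c)" by (rule Suc.IH[OF sT])
    finally show "sqrt (max ((picY v c a n s)^2 - v s) 0) \<le> a * exp (s - c)" .
  qed
  also have "\<dots> = a * exp (t - c) - a" using exp_integral[OF ct] by (rule integral_unique)
  finally show ?case by simp
qed

lemma exists_typeA:
  fixes v :: "real \<Rightarrow> real" and c a T :: real
  assumes vc: "continuous_on {c..T} v" and pos: "\<And>s. s \<in> {c..T} \<Longrightarrow> 0 < v s"
    and a: "sqrt (v c) < a" and cT: "c < T" and vT: "a * exp (T - c) < sqrt (v T)"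
  shows "\<exists>h. h c = a \<and> type_A v c h"
proof -
  define S where "S = {c..T}"
  have cS: "c \<in> S" using cT by (simp add: S_def)
  have "0 < v c" using pos[of c] cT by auto
  hence "0 < sqrt (v c)" by simp
  hence a0: "0 < a" using a by linarith
  define Y where "Y = picY v c a"
  define F where "F = (\<lambda>s x. sqrt (max (x^2 - v s) 0))"
  define Yl where "Yl = (\<lambda>t. SUP n. Y n t)"
  have lim: "(\<lambda>n. Y n t) \<longlonglongrightarrow> Yl t" if t: "t \<in> S" for t
    unfolding Yl_def
  proof (rule LIMSEQ_incseq_SUP)
    show "bdd_above (range (\<lambda>n. Y n t))"
      using picY_le[OF vc pos _ t[unfolded S_def]] a0 unfolding Y_def
      by (intro bdd_aboveI[of _ "a * exp (t - c)"]) auto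
    show "incseq (\<lambda>n. Y n t)"
      using picY_mono[OF vc _ t[unfolded S_def]] a0 unfolding Y_def
      by (intro incseq_SucI) auto
  qed
  have Yl_ge: "a \<le> Yl t" if t: "t \<in> S" for t
    using lim[OF t] picY_ge[OF vc t[unfolded S_def]] unfolding Y_def
    by (intro LIMSEQ_le_const) auto
  have Yl_le: "Yl t \<le> a * exp (t - c)" if t: "t \<in> S" for t
    using lim[OF t] picY_le[OF vc pos _ t[unfolded S_def]] a0 unfolding Y_def
    by (intro LIMSEQ_le_const2) auto
  have YlF: "Yl t = a + integral {c..t} (\<lambda>s. F s (Yl s)) \<and> (\<lambda>s. F s (Yl s)) integrable_on {c..t}"
    if t: "t \<in> S" for t
  proof -
    have ct: "c \<le> t" using t by (simp add: S_def)
    have sub: "s \<in> S" if "s \<in> {c..t}" for s using that t by (auto simp: S_def)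
    have p1: "(\<lambda>s. F s (Y k s)) integrable_on {c..t}" for k
      unfolding F_def Y_def using picF_int[OF vc t[unfolded S_def]] by blast
    have p2: "(\<lambda>s. a * exp (s - c)) integrable_on {c..t}" using exp_integral[OF ct] by blast
    have p3: "norm (F s (Y k s)) \<le> a * exp (s - c)" if s: "s \<in> {c..t}" for k s
    proof -
      have sS: "s \<in> {c..T}" using sub[OF s] by (simp add: S_def)
      have "F s (Y k s) \<le> Y k s" unfolding F_def Y_def
        by (rule F_le) (use pos[OF sS] picY_ge[OF vc sS, of a k] a0 in auto)
      also have "\<dots> \<le> a * exp (s - c)" unfolding Y_def by (rule picY_le[OF vc pos _ sS]) (use a0 in auto)
      finally show ?thesis by (simp add: F_def)
    qed
    have p4: "(\<lambda>k. F s (Y k s)) \<longlonglongrightarrow> F s (Yl s)" if s: "s \<in> {c..t}" for s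
    proof -
      have l: "(\<lambda>k. Y k s) \<longlonglongrightarrow> Yl s" by (rule lim[OF sub[OF s]])
      show ?thesis unfolding F_def
        by (intro tendsto_real_sqrt tendsto_max tendsto_diff tendsto_power l tendsto_const)
    qed
    have dc: "(\<lambda>s. F s (Yl s)) integrable_on {c..t} \<and>
       (\<lambda>k. integral {c..t} (\<lambda>s. F s (Y k s))) \<longlonglongrightarrow> integral {c..t} (\<lambda>s. F s (Yl s))"
      using dominated_convergence[of "\<lambda>k s. F s (Y k s)" "{c..t}" "\<lambda>s. a * exp (s - c)" "\<lambda>s. F s (Yl s)", OF p1 p2 p3 p4]
      by blast
    have "(\<lambda>k. Y (Suc k) t) \<longlonglongrightarrow> a + integral {c..t} (\<lambda>s. F s (Yl s))"
      using tendsto_add[OF tendsto_const[of a] dc[THEN conjunct2]] by (simp add: Y_def F_def)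
    moreover have "(\<lambda>k. Y (Suc k) t) \<longlonglongrightarrow> Yl t" using lim[OF t] by (rule LIMSEQ_Suc)
    ultimately have "Yl t = a + integral {c..t} (\<lambda>s. F s (Yl s))" by (rule LIMSEQ_unique[rotated])
    thus ?thesis using dc by blast
  qed
  have YlE: "a + integral {c..t} (\<lambda>s. F s (Yl s)) = Yl t" if "t \<in> S" for t
    using YlF[OF that] by (rule conjunct1[THEN sym])
  have Ylc: "Yl c = a" using YlE[OF cS] by simp
  have intT: "(\<lambda>s. F s (Yl s)) integrable_on S" using YlF[of T] cT by (simp add: S_def)
  have contYl: "continuous_on S Yl"
  proof -
    have "continuous_on S (\<lambda>t. a + integral {c..t} (\<lambda>s. F s (Yl s)))"
      using indefinite_integral_continuous_1[OF intT[unfolded S_def]] unfolding S_def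
      by (intro continuous_intros) auto
    thus ?thesis by (rule continuous_on_eq) (rule YlE)
  qed
  have vcS: "continuous_on S v" using vc by (simp add: S_def)
  have contG: "continuous_on S (\<lambda>s. F s (Yl s))"
    unfolding F_def using contYl vcS by (intro continuous_intros)
  have der: "(Yl has_real_derivative F t (Yl t)) (at t within S)" if t: "t \<in> S" for t
  proof -
    have "((\<lambda>x. integral {c..x} (\<lambda>s. F s (Yl s))) has_real_derivative F t (Yl t)) (at t within {c..T})"
      by (rule integral_has_real_derivative) (use contG t in \<open>auto simp: S_def\<close>)
    hence "((\<lambda>x. a + integral {c..x} (\<lambda>s. F s (Yl s))) has_real_derivative F t (Yl t)) (at t within S)"
      unfolding S_def by (intro derivative_eq_intros) auto
    thus ?thesis
      by (rule has_field_derivative_transform_within[where d = 1]) (use t YlE in auto)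
  qed
  define d where "d = (\<lambda>t. Yl t - sqrt (v t))"
  have contd: "continuous_on S d" unfolding d_def using contYl vcS by (intro continuous_intros)
  define H where "H = S \<inter> d -` {..0}"
  have clH: "closed H" unfolding H_def
    by (rule continuous_closed_preimage[OF contd]) (auto simp: S_def)
  have TS: "T \<in> S" using cT by (simp add: S_def)
  have TH: "T \<in> H" using Yl_le[OF TS] vT TS by (simp add: H_def d_def)
  have bH: "bdd_below H" by (rule bdd_belowI[of _ c]) (auto simp: H_def S_def)
  define p where "p = Inf H"
  have pH: "p \<in> H" unfolding p_def using TH bH clH by (intro closed_contains_Inf) auto
  have dc: "0 < d c" using Ylc a by (simp add: d_def)
  have pS: "p \<in> S" and dp: "d p \<le> 0" using pH by (auto simp: H_def)
  have pc: "c < p" using pS dp dc by (cases "p = c") (auto simp: S_def)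
  have below: "0 < d t" if t: "t \<in> {c..<p}" for t
  proof (rule ccontr)
    assume "\<not> 0 < d t"
    moreover have "t \<in> S" using t pS by (auto simp: S_def)
    ultimately have "t \<in> H" by (auto simp: H_def)
    hence "p \<le> t" unfolding p_def using bH by (rule cInf_lower)
    thus False using t by auto
  qed
  have dp0: "d p = 0"
  proof -
    have "continuous_on {c..p} d" by (rule continuous_on_subset[OF contd]) (use pS in \<open>auto simp: S_def\<close>)
    then obtain x where x: "c \<le> x" "x \<le> p" "d x = 0"
      using IVT2'[of d p 0 c] dp dc pc by auto
    show ?thesis
    proof (cases "x < p")
      case True thus ?thesis using below[of x] x by auto
    qed (use x in auto)
  qed
  show ?thesis
  proof (intro exI conjI)
    show "Yl c = a" by (rule Ylc)
    show "type_A v c Yl"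
      unfolding type_A_def
    proof (intro exI conjI ballI)
      show "c < p" by (rule pc)
      show "continuous_on {c..p} Yl" by (rule continuous_on_subset[OF contYl]) (use pS in \<open>auto simp: S_def\<close>)
      show "Yl p = sqrt (v p)" using dp0 by (simp add: d_def)
      fix x assume x: "x \<in> {c..<p}"
      show lt: "sqrt (v x) < Yl x" using below[OF x] by (simp add: d_def)
      have xS: "x \<in> S" using x pS by (auto simp: S_def)
      have "v x < (Yl x)^2"
      proof -
        have v0: "0 < v x" using pos[of x] xS by (simp add: S_def)
        hence "v x = (sqrt (v x))^2" by simp
        also have "\<dots> < (Yl x)^2" using lt v0 by (intro power_strict_mono) auto
        finally show ?thesis .
      qed
      hence Fx: "F x (Yl x) = sqrt ((Yl x)^2 - v x)" by (simp add: F_def)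
      have "(Yl has_real_derivative F x (Yl x)) (at x within {c..<p})"
        by (rule DERIV_subset[OF der[OF xS]]) (use pS in \<open>auto simp: S_def\<close>)
      thus "(Yl has_real_derivative sqrt ((Yl x)^2 - v x)) (at x within {c..<p})" by (simp add: Fx)
    qed
  qed
qed

lemma no_typeB:
  fixes v h :: "real \<Rightarrow> real" and c :: real
  assumes pos: "\<And>\<phi>. \<phi> \<ge> c \<Longrightarrow> v \<phi> > 0"
    and growth: "filterlim (\<lambda>\<phi>. v \<phi> * exp (- 2 * \<phi>)) at_top at_top"
    and B: "type_B v c h"
  shows False
proof -
  have hB: "sqrt (v x) < h x" "(h has_real_derivative sqrt ((h x)^2 - v x)) (at x within {c..})"
    if "x \<ge> c" for x using B that unfolding type_B_def by auto
  define k where "k = (\<lambda>x. h x * exp (-(x - c)))"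
  define D where "D = (\<lambda>x. sqrt ((h x)^2 - v x) * exp (-(x - c)) - h x * exp (-(x - c)))"
  have kle: "k x \<le> k c" if x: "x \<ge> c" for x
  proof -
    have "\<exists>y\<in>{c..x}. k x - k c = (\<lambda>u. D y * u) (x - c)"
    proof (rule mvt_very_simple[OF x])
      fix y assume y: "c \<le> y" "y \<le> x"
      have "(h has_real_derivative sqrt ((h y)^2 - v y)) (at y within {c..x})"
        by (rule DERIV_subset[OF hB(2)]) (use y in auto)
      moreover have "((\<lambda>x. exp (-(x - c))) has_real_derivative exp (-(y - c)) * (-1)) (at y within {c..x})"
        by (auto intro!: derivative_eq_intros)
      ultimately have "(k has_real_derivative sqrt ((h y)^2 - v y) * exp (-(y - c)) + exp (-(y - c)) * (-1) * h y) (at y within {c..x})"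
        unfolding k_def by (rule DERIV_mult)
      moreover have "sqrt ((h y)^2 - v y) * exp (-(y - c)) + exp (-(y - c)) * (-1) * h y = D y"
        by (simp add: D_def)
      ultimately have "(k has_real_derivative D y) (at y within {c..x})" by simp
      thus "(k has_derivative (\<lambda>u. D y * u)) (at y within {c..x})"
        by (simp add: has_field_derivative_def)
    qed
    then obtain y where y: "c \<le> y" "y \<le> x" "k x - k c = D y * (x - c)" by auto
    have "0 < v y" using pos[of y] y by auto
    hence "0 < sqrt (v y)" by simp
    hence hy: "0 < h y" using hB(1)[OF y(1)] by linarith
    have "sqrt ((h y)^2 - v y) \<le> sqrt ((h y)^2)"
      using pos[of y] y by (intro real_sqrt_le_mono) auto
    hence sh: "sqrt ((h y)^2 - v y) \<le> h y" using hy by simp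
    have "D y \<le> 0" unfolding D_def using mult_right_mono[OF sh, of "exp (-(y - c))"] by simp
    hence "D y * (x - c) \<le> 0" using y by (simp add: mult_nonpos_nonneg)
    thus ?thesis using y by simp
  qed
  have hle: "h x \<le> h c * exp (x - c)" if x: "x \<ge> c" for x
  proof -
    have "h x = k x * exp (x - c)" unfolding k_def by (simp add: mult.assoc flip: exp_add)
    also have "\<dots> \<le> k c * exp (x - c)" using kle[OF x] by (simp add: mult_right_mono)
    finally show ?thesis by (simp add: k_def)
  qed
  define Z where "Z = (h c)^2 * exp (- 2 * c)"
  have "eventually (\<lambda>x. Z + 1 \<le> v x * exp (- 2 * x)) at_top"
    using growth by (simp add: filterlim_at_top)
  then obtain N where N: "\<And>x. x \<ge> N \<Longrightarrow> Z + 1 \<le> v x * exp (- 2 * x)"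
    by (auto simp: eventually_at_top_linorder)
  define x where "x = max N c"
  have x: "Z + 1 \<le> v x * exp (- 2 * x)" "c \<le> x" using N[of x] by (auto simp: x_def)
  have hx0: "0 \<le> sqrt (v x)" using pos[OF x(2)] by simp
  have hx1: "0 \<le> h x" using hB(1)[OF x(2)] hx0 by linarith
  have "v x = (sqrt (v x))^2" using pos[OF x(2)] by simp
  also have "\<dots> < (h x)^2" using hB(1)[OF x(2)] hx0 by (intro power_strict_mono) auto
  also have "(h x)^2 \<le> (h c * exp (x - c))^2" using hle[OF x(2)] hx1
    by (intro power_mono)
  finally have "v x * exp (- 2 * x) < (h c * exp (x - c))^2 * exp (- 2 * x)"
    by (simp add: mult_strict_right_mono)
  also have "\<dots> = Z" unfolding Z_def
    by (simp add: power_mult_distrib power2_eq_square mult_exp_exp flip: exp_add)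
  finally show False using x(1) by simp
qed

theorem proposition5:
  fixes v :: "real \<Rightarrow> real" and \<phi>0 :: real
  assumes smooth: "smooth_at_all {\<phi>0..} v"
    and pos: "\<And>\<phi>. \<phi> \<ge> \<phi>0 \<Longrightarrow> v \<phi> > 0"
    and incr: "\<And>\<phi>. \<phi> \<ge> \<phi>0 \<Longrightarrow> deriv v \<phi> > 0"
    and growth: "filterlim (\<lambda>\<phi>. v \<phi> * exp (- 2 * \<phi>)) at_top at_top"
  shows "(\<forall>h0 > sqrt (v \<phi>0).
            (\<exists>h. h \<phi>0 = h0 \<and> type_A v \<phi>0 h) \<and>
            \<not> (\<exists>h. h \<phi>0 = h0 \<and> type_B v \<phi>0 h))
         \<and> \<not> separatrix_exists v \<phi>0"
proof -
  obtain D where D0: "D 0 = v" and dD: "\<forall>n. \<forall>x\<in>{\<phi>0..}. (D n has_real_derivative D (Suc n) x) (at x)"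
    using smooth unfolding smooth_at_all_def by blast
  have vcont: "continuous_on {\<phi>0..T} v" for T
  proof (rule continuous_at_imp_continuous_on, intro ballI)
    fix x assume "x \<in> {\<phi>0..T}"
    hence "(v has_real_derivative D 1 x) (at x)" using dD D0 by force
    thus "isCont v x" by (rule DERIV_isCont)
  qed
  have noB: "\<not> type_B v \<phi>0 h" for h using no_typeB[OF pos growth] by blast
  have A: "\<exists>h. h \<phi>0 = h0 \<and> type_A v \<phi>0 h" if h0: "h0 > sqrt (v \<phi>0)" for h0
  proof -
    define Z where "Z = h0^2 * exp (- 2 * \<phi>0)"
    have "eventually (\<lambda>x. Z + 1 \<le> v x * exp (- 2 * x)) at_top"
      using growth by (simp add: filterlim_at_top)
    then obtain N where N: "\<And>x. x \<ge> N \<Longrightarrow> Z + 1 \<le> v x * exp (- 2 * x)"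
      by (auto simp: eventually_at_top_linorder)
    define T where "T = max N (\<phi>0 + 1)"
    have cT: "\<phi>0 < T" by (simp add: T_def)
    have "Z < v T * exp (- 2 * T)" using N[of T] by (simp add: T_def)
    have eq: "(h0 * exp (T - \<phi>0))^2 = Z * exp (2 * T)" unfolding Z_def
      by (simp add: power_mult_distrib power2_eq_square mult_exp_exp flip: exp_add)
    have "(h0 * exp (T - \<phi>0))^2 < v T * exp (- 2 * T) * exp (2 * T)" unfolding eq using \<open>Z < _\<close> by simp
    also have "\<dots> = v T" by (simp add: mult.assoc flip: exp_add)
    finally have "h0 * exp (T - \<phi>0) < sqrt (v T)" by (rule real_less_rsqrt)
    thus ?thesis
      by (intro exists_typeA[OF vcont _ h0 cT]) (use pos in auto)
  qed
  show ?thesis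
    unfolding separatrix_exists_def using A noB by blast
qed

end
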